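(* Let $F=\{T_1,\dots,T_n\}$ be a finite family of reduction operators relative to a well-ordered set $(G,<)$, let $\tilde F=\{\tilde T_1,\dots,\tilde T_n\}$ be the reduction of $F$, and let $C=\{C_2,\dots,C_n\}$ be the incremental completion of $\tilde F$. Then $F\cup C$ is a completion of $F$.
   Context: Let $\mathbb{K}$ be a field, $(G,<)$ a well-ordered set and $\mathbb{K}G$ the vector space with basis $G$. For $v\neq0$, $\mathrm{lt}(v)$ is the greatest element of $G$ appearing with nonzero coefficient in $v$. Extend $<$ to $\mathbb{K}G$: $u<v$ if $u=0$ and $v\neq0$, or if $\mathrm{lt}(u)<\mathrm{lt}(v)$; $u\le v$ means $u<v$ or $u=v$. A reduction operator is an idempotent linear endomorphism $T$ of $\mathbb{K}G$ with $T(g)\le g$ for all $g\in G$; $\mathrm{nf}(T)=\{g\in G\mid T(g)=g\}$, $\mathrm{red}(T)=G\setminus\mathrm{nf}(T)$. For every subspace $V$ there is a unique reduction operator $\ker^{-1}(V)$ with kernel $V$. $T\vee T'=\ker^{-1}(\ker T\cap\ker T')$. For a set $F$ of reduction operators, $\wedge F=\ker^{-1}(\sum_{T\in F}\ker T)$, $\mathrm{nf}(F)=\bigcap_{T\in F}\mathrm{nf}(T)$, $\mathrm{obs}(F)=\mathrm{nf}(F)\setminus\mathrm{nf}(\wedge F)$; $F$ is confluent if $\mathrm{obs}(F)=\emptyset$; a completion of $F$ is a confluent set $F'$ of reduction operators with $F\subseteq F'$ and $\wedge F'=\wedge F$. For a set $F$, $C^F=(\wedge F)\vee\ker^{-1}(\mathbb{K}\,\mathrm{nf}(F))$,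 where $\mathbb{K}\,\mathrm{nf}(F)$ is the subspace spanned by $\mathrm{nf}(F)$. Syzygies: $\mathbf{ker}(F)=\ker T_1\times\dots\times\ker T_n$, $\pi_F(v_1,\dots,v_n)=v_1+\dots+v_n$, $\mathrm{syz}(F)=\ker\pi_F$. For $g\in\mathrm{red}(T_i)$, $e_{i,g}$ is the tuple with $g-T_i(g)$ at position $i$ and $0$ elsewhere; these form a basis of $\mathbf{ker}(F)$, well-ordered by $e_{i,g}\sqsubset e_{i',g'}$ iff $i<i'$, or $i=i'$ and $g<g'$; $\mathrm{lt}(\mathrm{syz}(F))$ is the set of $\sqsubset$-greatest basis elements appearing in nonzero syzygies. The reduction of $F$ is $\tilde F=\{\tilde T_1,\dots,\tilde T_n\}$ where $\tilde T_i$ is the linear map with $\tilde T_i(g)=g$ if $g\in\mathrm{red}(T_i)$ and $e_{i,g}\in\mathrm{lt}(\mathrm{syz}(F))$, and $\tilde T_i(g)=T_i(g)$ otherwise. Incremental completion of a family $\{S_1,\dots,S_n\}$: set $F_1=\{S_1\}$ and for $2\le i\le n$, $C_i=C^{F_{i-1}\cup\{S_i\}}$ and $F_i=F_{i-1}\cup\{S_i,C_i\}$; the incremental completion is $\{C_2,\dots,C_n\}$. *)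

theory Defs
  imports "HOL-Library.Poly_Mapping"
begin

text \<open>The vector space KG is modelled as finitely supported functions 'g =>0 'k,
  where 'g carries a well-order (type class wellorder) and 'k is a field.\<close>

type_synonym ('g, 'k) vec = "'g \<Rightarrow>\<^sub>0 'k"
type_synonym ('g, 'k) op = "('g, 'k) vec \<Rightarrow> ('g, 'k) vec"

definition bvec :: "'g \<Rightarrow> ('g, 'k::field) vec" where
  "bvec g = Poly_Mapping.single g 1"

definition smul :: "'k::field \<Rightarrow> ('g, 'k) vec \<Rightarrow> ('g, 'k) vec" where
  "smul c v = Poly_Mapping.map (\<lambda>x. c * x) v"

definition lt :: "('g::wellorder, 'k::field) vec \<Rightarrow> 'g" where
  "lt v = Max (Poly_Mapping.keys v)"

definition vless :: "('g::wellorder, 'k::field) vec \<Rightarrow> ('g, 'k) vec \<Rightarrow> bool" where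
  "vless u v \<longleftrightarrow> (u = 0 \<and> v \<noteq> 0) \<or> (u \<noteq> 0 \<and> v \<noteq> 0 \<and> lt u < lt v)"

definition vle :: "('g::wellorder, 'k::field) vec \<Rightarrow> ('g, 'k) vec \<Rightarrow> bool" where
  "vle u v \<longleftrightarrow> vless u v \<or> u = v"

definition is_linear :: "('g, 'k::field) op \<Rightarrow> bool" where
  "is_linear T \<longleftrightarrow> (\<forall>u v. T (u + v) = T u + T v) \<and> (\<forall>c v. T (smul c v) = smul c (T v))"

definition reduction_op :: "('g::wellorder, 'k::field) op \<Rightarrow> bool" where
  "reduction_op T \<longleftrightarrow> is_linear T \<and> (\<forall>v. T (T v) = T v) \<and> (\<forall>g. vle (T (bvec g)) (bvec g))"

definition nf :: "('g::wellorder, 'k::field) op \<Rightarrow> 'g set" where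
  "nf T = {g. T (bvec g) = bvec g}"

definition red :: "('g::wellorder, 'k::field) op \<Rightarrow> 'g set" where
  "red T = UNIV - nf T"

definition kerop :: "('g, 'k::field) op \<Rightarrow> ('g, 'k) vec set" where
  "kerop T = {v. T v = 0}"

text \<open>The unique reduction operator with kernel V (V a subspace).\<close>
definition kerinv :: "('g::wellorder, 'k::field) vec set \<Rightarrow> ('g, 'k) op" where
  "kerinv V = (THE T. reduction_op T \<and> kerop T = V)"

definition join :: "('g::wellorder, 'k::field) op \<Rightarrow> ('g, 'k) op \<Rightarrow> ('g, 'k) op" where
  "join T T' = kerinv (kerop T \<inter> kerop T')"

definition sumker :: "('g::wellorder, 'k::field) op set \<Rightarrow> ('g, 'k) vec set" where
  "sumker F = {(\<Sum>T\<in>A. f T) | A f. finite A \<and> A \<subseteq> F \<and> (\<forall>T\<in>A. f T \<in> kerop T)}"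

definition meet :: "('g::wellorder, 'k::field) op set \<Rightarrow> ('g, 'k) op" where
  "meet F = kerinv (sumker F)"

definition nfF :: "('g::wellorder, 'k::field) op set \<Rightarrow> 'g set" where
  "nfF F = (\<Inter>T\<in>F. nf T)"

definition obs :: "('g::wellorder, 'k::field) op set \<Rightarrow> 'g set" where
  "obs F = nfF F - nf (meet F)"

definition confluent :: "('g::wellorder, 'k::field) op set \<Rightarrow> bool" where
  "confluent F \<longleftrightarrow> obs F = {}"

definition is_completion :: "('g::wellorder, 'k::field) op set \<Rightarrow> ('g, 'k) op set \<Rightarrow> bool" where
  "is_completion F' F \<longleftrightarrow> (\<forall>T\<in>F'. reduction_op T) \<and> confluent F' \<and> F \<subseteq> F' \<and> meet F' = meet F"

definition lspan :: "('g, 'k::field) vec set \<Rightarrow> ('g, 'k) vec set" where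
  "lspan S = {(\<Sum>s\<in>A. smul (c s) s) | A c. finite A \<and> A \<subseteq> S}"

definition CF :: "('g::wellorder, 'k::field) op set \<Rightarrow> ('g, 'k) op" where
  "CF F = join (meet F) (kerinv (lspan (bvec ` nfF F)))"

section \<open>Syzygies of a family given as a list Ts = [T_1,...,T_n] (0-indexed)\<close>

text \<open>Tuples (v_1,...,v_n) are functions nat => vec, zero outside {0..<n}.\<close>

definition kerbold :: "('g::wellorder, 'k::field) op list \<Rightarrow> (nat \<Rightarrow> ('g, 'k) vec) set" where
  "kerbold Ts = {w. (\<forall>i<length Ts. w i \<in> kerop (Ts ! i)) \<and> (\<forall>i\<ge>length Ts. w i = 0)}"

definition syz :: "('g::wellorder, 'k::field) op list \<Rightarrow> (nat \<Rightarrow> ('g, 'k) vec) set" where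
  "syz Ts = {w \<in> kerbold Ts. (\<Sum>i<length Ts. w i) = 0}"

definition ebas :: "('g::wellorder, 'k::field) op list \<Rightarrow> nat \<Rightarrow> 'g \<Rightarrow> (nat \<Rightarrow> ('g, 'k) vec)" where
  "ebas Ts i g = (\<lambda>j. if j = i then bvec g - (Ts ! i) (bvec g) else 0)"

text \<open>Index set of the basis of kerbold: pairs (i,g) with g in red(T_i).\<close>
definition eidx :: "('g::wellorder, 'k::field) op list \<Rightarrow> (nat \<times> 'g) set" where
  "eidx Ts = {(i, g). i < length Ts \<and> g \<in> red (Ts ! i)}"

definition sqless :: "nat \<times> 'g::wellorder \<Rightarrow> nat \<times> 'g \<Rightarrow> bool" where
  "sqless p q \<longleftrightarrow> fst p < fst q \<or> (fst p = fst q \<and> snd p < snd q)"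

text \<open>lt(syz F): the (indices of the) greatest basis elements e_{i,g} appearing with
  nonzero coefficient in the basis expansion of some nonzero syzygy.\<close>
definition lt_syz :: "('g::wellorder, 'k::field) op list \<Rightarrow> (nat \<times> 'g) set" where
  "lt_syz Ts = {p. \<exists>w S c. w \<in> syz Ts \<and> w \<noteq> (\<lambda>_. 0) \<and> finite S \<and> S \<subseteq> eidx Ts
       \<and> (\<forall>q\<in>S. c q \<noteq> 0)
       \<and> w = (\<lambda>j. \<Sum>q\<in>S. smul (c q) (ebas Ts (fst q) (snd q) j))
       \<and> p \<in> S \<and> (\<forall>q\<in>S. q = p \<or> sqless q p)}"

definition lin_ext :: "('g \<Rightarrow> ('g, 'k::field) vec) \<Rightarrow> ('g, 'k) op" where
  "lin_ext f v = (\<Sum>g\<in>Poly_Mapping.keys v. smul (Poly_Mapping.lookup v g) (f g))"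

definition red_family :: "('g::wellorder, 'k::field) op list \<Rightarrow> ('g, 'k) op list" where
  "red_family Ts = map (\<lambda>i. lin_ext (\<lambda>g. if g \<in> red (Ts ! i) \<and> (i, g) \<in> lt_syz Ts
                                       then bvec g else (Ts ! i) (bvec g)))
                       [0..<length Ts]"

section \<open>Incremental completion of a list Ss = [S_1,...,S_n] (0-indexed)\<close>

fun incF :: "('g::wellorder, 'k::field) op list \<Rightarrow> nat \<Rightarrow> ('g, 'k) op set" where
  "incF Ss 0 = {Ss ! 0}"
| "incF Ss (Suc k) = incF Ss k \<union> {Ss ! Suc k, CF (incF Ss k \<union> {Ss ! Suc k})}"

definition incC :: "('g::wellorder, 'k::field) op list \<Rightarrow> ('g, 'k) op set" where
  "incC Ss = {CF (incF Ss (k - 1) \<union> {Ss ! k}) | k. 1 \<le> k \<and> k < length Ss}"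

end

theory Submission
  imports Defs
begin

lemma lookup_smul [simp]: "Poly_Mapping.lookup (smul c v) g = c * Poly_Mapping.lookup v g"
  by (simp add: smul_def Poly_Mapping.map.rep_eq when_def)

lemma lookup_bvec: "Poly_Mapping.lookup (bvec g :: ('g,'k::field) vec) h = (if h = g then 1 else 0)"
  by (simp add: bvec_def lookup_single)

lemma keys_bvec [simp]: "Poly_Mapping.keys (bvec g :: ('g,'k::field) vec) = {g}"
  by (simp add: bvec_def)

lemma bvec_nz [simp]: "(bvec g :: ('g,'k::field) vec) \<noteq> 0"
  using keys_bvec[of g] by (metis empty_not_insert keys_zero)

lemma smul_add: "smul c (u + v) = smul c u + smul c v"
  by (rule poly_mapping_eqI) (simp add: lookup_add algebra_simps)

lemma smul_add2: "smul (a + b) v = smul a v + smul b v"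
  by (rule poly_mapping_eqI) (simp add: lookup_add algebra_simps)

lemma smul_diff: "smul c (u - v) = smul c u - smul c v"
  by (rule poly_mapping_eqI) (simp add: lookup_minus algebra_simps)

lemma smul_zero [simp]: "smul c 0 = 0"
  by (rule poly_mapping_eqI) simp

lemma smul_0 [simp]: "smul 0 v = 0"
  by (rule poly_mapping_eqI) simp

lemma smul_1 [simp]: "smul 1 v = v"
  by (rule poly_mapping_eqI) simp

lemma smul_m1: "smul (-1) v = - v"
  by (rule poly_mapping_eqI) simp

lemma smul_smul: "smul a (smul b v) = smul (a * b) v"
  by (rule poly_mapping_eqI) simp

lemma smul_sum: "smul c (sum f A) = (\<Sum>x\<in>A. smul c (f x))"
  by (induction A rule: infinite_finite_induct) (auto simp: smul_add)

lemma keys_smul: "Poly_Mapping.keys (smul c v) \<subseteq> Poly_Mapping.keys v"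
  by (auto simp: in_keys_iff)

lemma smul_bvec: "smul c (bvec g) = Poly_Mapping.single g c"
  by (rule poly_mapping_eqI) (simp add: lookup_bvec lookup_single)

lemma expansion: "v = (\<Sum>g\<in>Poly_Mapping.keys v. smul (Poly_Mapping.lookup v g) (bvec g))"
proof (rule poly_mapping_eqI)
  fix h
  have "(\<Sum>g\<in>Poly_Mapping.keys v. Poly_Mapping.lookup (smul (Poly_Mapping.lookup v g) (bvec g)) h)
      = (\<Sum>g\<in>Poly_Mapping.keys v. (if h = g then Poly_Mapping.lookup v g else 0))"
    by (rule sum.cong) (auto simp: lookup_bvec)
  also have "\<dots> = Poly_Mapping.lookup v h"
    by (simp add: sum.delta in_keys_iff)
  finally show "Poly_Mapping.lookup v h = Poly_Mapping.lookup (\<Sum>g\<in>Poly_Mapping.keys v. smul (Poly_Mapping.lookup v g) (bvec g)) h"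
    by (simp add: lookup_sum)
qed

lemma lt_in_keys: "v \<noteq> 0 \<Longrightarrow> lt v \<in> Poly_Mapping.keys v"
  unfolding lt_def by (rule Max_in) auto

lemma le_lt: "k \<in> Poly_Mapping.keys v \<Longrightarrow> k \<le> lt v"
  unfolding lt_def by (rule Max_ge) auto

lemma lt_eqI: "h \<in> Poly_Mapping.keys v \<Longrightarrow> (\<forall>k\<in>Poly_Mapping.keys v. k \<le> h) \<Longrightarrow> lt v = h"
  by (metis antisym le_lt lt_in_keys keys_zero empty_iff)

lemma lt_bvec [simp]: "lt (bvec g :: ('g::wellorder,'k::field) vec) = g"
  by (rule lt_eqI) auto

definition subsp :: "('g, 'k::field) vec set \<Rightarrow> bool" where
  "subsp V \<longleftrightarrow> 0 \<in> V \<and> (\<forall>u\<in>V. \<forall>w\<in>V. u + w \<in> V) \<and> (\<forall>c. \<forall>u\<in>V. smul c u \<in> V)"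

lemma subsp_0: "subsp V \<Longrightarrow> 0 \<in> V" by (simp add: subsp_def)
lemma subsp_add: "subsp V \<Longrightarrow> u \<in> V \<Longrightarrow> w \<in> V \<Longrightarrow> u + w \<in> V" by (simp add: subsp_def)
lemma subsp_smul: "subsp V \<Longrightarrow> u \<in> V \<Longrightarrow> smul c u \<in> V" by (simp add: subsp_def)
lemma subsp_uminus: "subsp V \<Longrightarrow> u \<in> V \<Longrightarrow> - u \<in> V"
  by (metis subsp_smul smul_m1)
lemma subsp_diff: "subsp V \<Longrightarrow> u \<in> V \<Longrightarrow> w \<in> V \<Longrightarrow> u - w \<in> V"
  by (metis subsp_add subsp_uminus diff_conv_add_uminus)
lemma subsp_sum: "subsp V \<Longrightarrow> (\<forall>x\<in>A. f x \<in> V) \<Longrightarrow> sum f A \<in> V"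
  by (induction A rule: infinite_finite_induct) (auto simp: subsp_0 subsp_add)
lemma subsp_Int: "subsp V \<Longrightarrow> subsp W \<Longrightarrow> subsp (V \<inter> W)"
  by (simp add: subsp_def)
lemma subsp_keys: "subsp {w. Poly_Mapping.keys w \<subseteq> N}"
  unfolding subsp_def using keys_add keys_smul by fastforce

lemma lspanI: "finite A \<Longrightarrow> A \<subseteq> S \<Longrightarrow> (\<Sum>s\<in>A. smul (c s) s) \<in> lspan S"
  unfolding lspan_def by blast

lemma lspan_keys:
  fixes w :: "('g, 'k::field) vec"
  assumes kS: "Poly_Mapping.keys w \<subseteq> S"
  shows "w \<in> lspan (bvec ` S)"
proof -
  have inj: "inj_on (bvec :: 'g \<Rightarrow> ('g,'k) vec) (Poly_Mapping.keys w)"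
    by (rule inj_onI) (metis keys_bvec singleton_inject)
  have "w = (\<Sum>g\<in>Poly_Mapping.keys w. smul (Poly_Mapping.lookup w g) (bvec g))"
    by (rule expansion)
  also have "\<dots> = (\<Sum>s\<in>bvec ` Poly_Mapping.keys w. smul (Poly_Mapping.lookup w (the_elem (Poly_Mapping.keys s))) s)"
    by (simp add: sum.reindex[OF inj])
  finally have eq: "w = (\<Sum>s\<in>bvec ` Poly_Mapping.keys w. smul (Poly_Mapping.lookup w (the_elem (Poly_Mapping.keys s))) s)" .
  have "(\<Sum>s\<in>bvec ` Poly_Mapping.keys w. smul (Poly_Mapping.lookup w (the_elem (Poly_Mapping.keys s))) s) \<in> lspan (bvec ` S)"
    by (rule lspanI) (use kS in auto)
  then show ?thesis using eq by simp
qed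

lemma lspan_bvec: "lspan (bvec ` S) = {w :: ('g,'k::field) vec. Poly_Mapping.keys w \<subseteq> S}"
proof
  show "lspan (bvec ` S) \<subseteq> {w. Poly_Mapping.keys w \<subseteq> S}"
  proof
    fix w assume "w \<in> lspan (bvec ` S)"
    then obtain A c where w: "w = (\<Sum>s\<in>A. smul (c s) s)" and A: "A \<subseteq> bvec ` S"
      unfolding lspan_def by blast
    have "Poly_Mapping.keys w \<subseteq> (\<Union>s\<in>A. Poly_Mapping.keys (smul (c s) s))"
      unfolding w by (rule keys_sum)
    also have "\<dots> \<subseteq> S" using A keys_smul by fastforce
    finally show "w \<in> {w. Poly_Mapping.keys w \<subseteq> S}" by simp
  qed
next
  show "{w. Poly_Mapping.keys w \<subseteq> S} \<subseteq> lspan (bvec ` S)"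
    using lspan_keys by blast
qed

section \<open>Linear maps and reduction operators\<close>

lemma lin_add: "is_linear T \<Longrightarrow> T (u + v) = T u + T v"
  by (simp add: is_linear_def)
lemma lin_smul: "is_linear T \<Longrightarrow> T (smul c v) = smul c (T v)"
  by (simp add: is_linear_def)
lemma lin_0: "is_linear T \<Longrightarrow> T 0 = 0"
  by (metis lin_smul smul_0)
lemma lin_diff: "is_linear T \<Longrightarrow> T (u - v) = T u - T v"
  by (metis lin_add diff_add_cancel eq_diff_eq)
lemma lin_sum: "is_linear T \<Longrightarrow> T (sum f A) = (\<Sum>x\<in>A. T (f x))"
  by (induction A rule: infinite_finite_induct) (auto simp: lin_add lin_0)
lemma lin_expand: "is_linear T \<Longrightarrow> T v = (\<Sum>g\<in>Poly_Mapping.keys v. smul (Poly_Mapping.lookup v g) (T (bvec g)))"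
  by (subst expansion) (simp add: lin_sum lin_smul)
lemma subsp_ker: "is_linear T \<Longrightarrow> subsp (kerop T)"
  unfolding subsp_def kerop_def by (auto simp: lin_0 lin_add lin_smul)
lemma keys_lin: "is_linear T \<Longrightarrow> Poly_Mapping.keys (T v) \<subseteq> (\<Union>g\<in>Poly_Mapping.keys v. Poly_Mapping.keys (T (bvec g)))"
proof -
  assume L: "is_linear T"
  have "Poly_Mapping.keys (T v) \<subseteq> (\<Union>g\<in>Poly_Mapping.keys v. Poly_Mapping.keys (smul (Poly_Mapping.lookup v g) (T (bvec g))))"
    by (subst lin_expand[OF L]) (rule keys_sum)
  also have "\<dots> \<subseteq> (\<Union>g\<in>Poly_Mapping.keys v. Poly_Mapping.keys (T (bvec g)))"
    using keys_smul by fastforce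
  finally show ?thesis .
qed

lemma red_lin: "reduction_op T \<Longrightarrow> is_linear T" by (simp add: reduction_op_def)
lemma red_idem: "reduction_op T \<Longrightarrow> T (T v) = T v" by (simp add: reduction_op_def)
lemma red_vle: "reduction_op T \<Longrightarrow> vle (T (bvec g)) (bvec g)" by (simp add: reduction_op_def)

lemma red_iff: "g \<in> red T \<longleftrightarrow> g \<notin> nf T" by (simp add: red_def)

lemma red_bound: "reduction_op T \<Longrightarrow> j \<in> Poly_Mapping.keys (T (bvec g)) \<Longrightarrow> j \<le> g"
proof -
  assume R: "reduction_op T" and j: "j \<in> Poly_Mapping.keys (T (bvec g))"
  from red_vle[OF R, of g] show "j \<le> g"
    unfolding vle_def vless_def
  proof (elim disjE conjE)
    assume "T (bvec g) = 0" then show ?thesis using j by simp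
  next
    assume "T (bvec g) \<noteq> 0" "lt (T (bvec g)) < lt (bvec g)"
    then show ?thesis using le_lt[OF j] by simp
  next
    assume "T (bvec g) = bvec g" then show ?thesis using j by simp
  qed
qed

lemma red_bound_strict: "reduction_op T \<Longrightarrow> g \<in> red T \<Longrightarrow> j \<in> Poly_Mapping.keys (T (bvec g)) \<Longrightarrow> j < g"
proof -
  assume R: "reduction_op T" and gr: "g \<in> red T" and j: "j \<in> Poly_Mapping.keys (T (bvec g))"
  from red_vle[OF R, of g] show "j < g"
    unfolding vle_def vless_def
  proof (elim disjE conjE)
    assume "T (bvec g) = 0" then show ?thesis using j by simp
  next
    assume "T (bvec g) \<noteq> 0" "lt (T (bvec g)) < lt (bvec g)"
    then show ?thesis using le_lt[OF j] by simp
  next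
    assume "T (bvec g) = bvec g" then show ?thesis using gr by (simp add: red_def nf_def)
  qed
qed

lemma red_ker_e: "reduction_op T \<Longrightarrow> T (w - T w) = 0"
  by (simp add: lin_diff red_lin red_idem)

lemma red_R: "reduction_op T \<Longrightarrow> T v = 0 \<Longrightarrow> v \<noteq> 0 \<Longrightarrow> lt v \<in> red T"
proof (rule ccontr)
  assume R: "reduction_op T" and Tv: "T v = 0" and nz: "v \<noteq> 0" and nr: "lt v \<notin> red T"
  define h where "h = lt v"
  have hnf: "T (bvec h) = bvec h" using nr by (simp add: h_def red_def nf_def)
  have hk: "h \<in> Poly_Mapping.keys v" using lt_in_keys[OF nz] by (simp add: h_def)
  have "Poly_Mapping.lookup (T v) h = (\<Sum>g\<in>Poly_Mapping.keys v. Poly_Mapping.lookup v g * Poly_Mapping.lookup (T (bvec g)) h)"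
    by (subst lin_expand[OF red_lin[OF R]]) (simp add: lookup_sum)
  also have "\<dots> = (\<Sum>g\<in>Poly_Mapping.keys v. (if g = h then Poly_Mapping.lookup v g else 0))"
  proof (rule sum.cong)
    fix g assume g: "g \<in> Poly_Mapping.keys v"
    show "Poly_Mapping.lookup v g * Poly_Mapping.lookup (T (bvec g)) h = (if g = h then Poly_Mapping.lookup v g else 0)"
    proof (cases "g = h")
      case True then show ?thesis using hnf by (simp add: lookup_bvec)
    next
      case False
      have "g \<le> h" using le_lt[OF g] by (simp add: h_def)
      hence "g < h" using False by simp
      hence "h \<notin> Poly_Mapping.keys (T (bvec g))" using red_bound[OF R] by (meson leD)
      then show ?thesis using False by (simp add: in_keys_iff)
    qed
  qed simp
  also have "\<dots> = Poly_Mapping.lookup v h" using hk by simp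
  finally show False using Tv hk by (simp add: in_keys_iff)
qed

lemma red_R': "reduction_op T \<Longrightarrow> g \<in> red T \<Longrightarrow>
   bvec g - T (bvec g) \<noteq> 0 \<and> lt (bvec g - T (bvec g)) = g \<and> T (bvec g - T (bvec g)) = 0"
proof -
  assume R: "reduction_op T" and g: "g \<in> red T"
  have gn: "g \<notin> Poly_Mapping.keys (T (bvec g))" using red_bound_strict[OF R g] by blast
  hence l: "Poly_Mapping.lookup (bvec g - T (bvec g)) g = 1"
    by (simp add: lookup_minus lookup_bvec in_keys_iff)
  hence gk: "g \<in> Poly_Mapping.keys (bvec g - T (bvec g))" by (simp add: in_keys_iff)
  have "\<forall>k\<in>Poly_Mapping.keys (bvec g - T (bvec g)). k \<le> g"
    using keys_diff[of "bvec g" "T (bvec g)"] red_bound[OF R] by fastforce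
  hence "lt (bvec g - T (bvec g)) = g" using lt_eqI gk by blast
  then show ?thesis using gk red_ker_e[OF R] by auto
qed

lemma red_image_bvec: "reduction_op T \<Longrightarrow> Poly_Mapping.keys (T (bvec g)) \<subseteq> nf T"
proof (induction g rule: less_induct)
  case (less g)
  show ?case
  proof (cases "g \<in> nf T")
    case True then show ?thesis by (simp add: nf_def)
  next
    case False
    hence gr: "g \<in> red T" by (simp add: red_def)
    have "Poly_Mapping.keys (T (T (bvec g))) \<subseteq> (\<Union>j\<in>Poly_Mapping.keys (T (bvec g)). Poly_Mapping.keys (T (bvec j)))"
      by (rule keys_lin[OF red_lin[OF less.prems]])
    also have "\<dots> \<subseteq> nf T" using less.IH[OF red_bound_strict[OF less.prems gr] less.prems] by blast
    finally show ?thesis by (simp add: red_idem[OF less.prems])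
  qed
qed

lemma red_image: "reduction_op T \<Longrightarrow> Poly_Mapping.keys (T w) \<subseteq> nf T"
  using keys_lin[OF red_lin, of T w] red_image_bvec by blast

lemma red_unique:
  assumes R1: "reduction_op T1" and R2: "reduction_op T2" and K: "kerop T1 = kerop T2"
  shows "T1 = T2"
proof -
  have nfs: "nf T1 = nf T2"
  proof -
    have *: "red S1 \<subseteq> red S2" if "reduction_op S1" "reduction_op S2" "kerop S1 = kerop S2" for S1 S2
    proof
      fix g assume g: "g \<in> red S1"
      from red_R'[OF that(1) g] have "S2 (bvec g - S1 (bvec g)) = 0" "bvec g - S1 (bvec g) \<noteq> 0"
        "lt (bvec g - S1 (bvec g)) = g"
        using that(3) by (auto simp: kerop_def)
      then show "g \<in> red S2" using red_R[OF that(2)] by metis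
    qed
    have n1: "nf T1 = UNIV - red T1" and n2: "nf T2 = UNIV - red T2" by (auto simp: red_def)
    from *[OF R1 R2 K] *[OF R2 R1 K[symmetric]] have "red T1 = red T2" by (rule subset_antisym)
    then show ?thesis by (simp add: n1 n2)
  qed
  show ?thesis
  proof
    fix w
    define d where "d = (w - T2 w) - (w - T1 w)"
    have d1: "d = T1 w - T2 w" by (simp add: d_def)
    have "w - T2 w \<in> kerop T1" "w - T1 w \<in> kerop T1"
      using red_ker_e[OF R2] red_ker_e[OF R1] K by (auto simp: kerop_def)
    hence "d \<in> kerop T1" unfolding d_def by (rule subsp_diff[OF subsp_ker[OF red_lin[OF R1]]])
    hence dk: "T1 d = 0" by (simp add: kerop_def)
    have "Poly_Mapping.keys d \<subseteq> Poly_Mapping.keys (T1 w) \<union> Poly_Mapping.keys (T2 w)"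
      unfolding d1 by (rule keys_diff)
    hence kd: "Poly_Mapping.keys d \<subseteq> nf T1"
      using red_image[OF R1, of w] red_image[OF R2, of w] nfs by blast
    show "T1 w = T2 w"
    proof (rule ccontr)
      assume "T1 w \<noteq> T2 w"
      hence dnz: "d \<noteq> 0" by (simp add: d1)
      have "lt d \<in> red T1" by (rule red_R[OF R1 dk dnz])
      moreover have "lt d \<in> nf T1" using lt_in_keys[OF dnz] kd by blast
      ultimately show False by (simp add: red_def)
    qed
  qed
qed

section \<open>Existence of kerinv\<close>

definition ltset :: "('g::wellorder, 'k::field) vec set \<Rightarrow> 'g set" where
  "ltset V = {lt v | v. v \<in> V \<and> v \<noteq> 0}"

lemma decomp_exists:
  fixes V :: "('g::wellorder, 'k::field) vec set"
  assumes S: "subsp V"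
  shows "\<forall>w. (\<forall>k\<in>Poly_Mapping.keys w. k \<le> h) \<longrightarrow>
           (\<exists>v\<in>V. Poly_Mapping.keys (w - v) \<subseteq> - ltset V \<inter> {..h})"
proof (induction h rule: less_induct)
  case (less h)
  have strict: "\<exists>v\<in>V. Poly_Mapping.keys (r - v) \<subseteq> - ltset V \<inter> {..h}"
    if r: "\<forall>k\<in>Poly_Mapping.keys r. k < h" for r :: "('g,'k) vec"
  proof (cases "r = 0")
    case True then show ?thesis using subsp_0[OF S] by (intro bexI[of _ 0]) auto
  next
    case False
    have ltr: "lt r < h" using r lt_in_keys[OF False] by blast
    from less.IH[OF ltr, rule_format, OF le_lt]
    obtain v where "v \<in> V" "Poly_Mapping.keys (r - v) \<subseteq> - ltset V \<inter> {..lt r}"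
      by blast
    then show ?thesis using \<open>lt r < h\<close> by (intro bexI[of _ v]) auto
  qed
  show ?case
  proof (intro allI impI)
    fix w :: "('g,'k) vec" assume wh: "\<forall>k\<in>Poly_Mapping.keys w. k \<le> h"
    define c where "c = Poly_Mapping.lookup w h"
    show "\<exists>v\<in>V. Poly_Mapping.keys (w - v) \<subseteq> - ltset V \<inter> {..h}"
    proof (cases "h \<in> ltset V")
      case False
      define r where "r = w - smul c (bvec h)"
      have "\<forall>k\<in>Poly_Mapping.keys r. k < h"
      proof
        fix k assume k: "k \<in> Poly_Mapping.keys r"
        have "k \<noteq> h" using k by (auto simp: r_def c_def in_keys_iff lookup_minus lookup_bvec)
        moreover have "k \<in> Poly_Mapping.keys w \<union> {h}"
          using k keys_diff[of w "smul c (bvec h)"] keys_smul[of c "bvec h"] by (auto simp: r_def)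
        ultimately have "k \<noteq> h" "k \<le> h" using wh by blast+
        then show "k < h" by (metis order_le_less)
      qed
      then obtain v where v: "v \<in> V" "Poly_Mapping.keys (r - v) \<subseteq> - ltset V \<inter> {..h}"
        using strict by blast
      have "w - v = smul c (bvec h) + (r - v)" by (simp add: r_def)
      hence "Poly_Mapping.keys (w - v) \<subseteq> Poly_Mapping.keys (smul c (bvec h)) \<union> Poly_Mapping.keys (r - v)"
        using keys_add by metis
      also have "\<dots> \<subseteq> - ltset V \<inter> {..h}" using v(2) keys_smul[of c "bvec h"] False by auto
      finally show ?thesis using v(1) by blast
    next
      case True
      then obtain u where u: "u \<in> V" "u \<noteq> 0" "lt u = h" by (auto simp: ltset_def)
      have hu: "Poly_Mapping.lookup u h \<noteq> 0" using lt_in_keys[OF u(2)] u(3) by (simp add: in_keys_iff)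
      define u' where "u' = smul (c / Poly_Mapping.lookup u h) u"
      have u'V: "u' \<in> V" using subsp_smul[OF S u(1)] by (simp add: u'_def)
      have lu': "Poly_Mapping.lookup u' h = c" using hu by (simp add: u'_def)
      have ku': "\<forall>k\<in>Poly_Mapping.keys u'. k \<le> h"
      proof
        fix k assume "k \<in> Poly_Mapping.keys u'"
        hence "k \<in> Poly_Mapping.keys u" using keys_smul[of "c / Poly_Mapping.lookup u h" u] unfolding u'_def by blast
        then show "k \<le> h" using le_lt[of k u] u(3) by simp
      qed
      define r where "r = w - u'"
      have "\<forall>k\<in>Poly_Mapping.keys r. k < h"
      proof
        fix k assume k: "k \<in> Poly_Mapping.keys r"
        have "k \<noteq> h" using k lu' by (auto simp: r_def c_def in_keys_iff lookup_minus)
        moreover have "k \<in> Poly_Mapping.keys w \<union> Poly_Mapping.keys u'"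
          using k keys_diff[of w u'] by (auto simp: r_def)
        ultimately have "k \<noteq> h" "k \<le> h" using wh ku' by blast+
        then show "k < h" by (metis order_le_less)
      qed
      then obtain v where v: "v \<in> V" "Poly_Mapping.keys (r - v) \<subseteq> - ltset V \<inter> {..h}"
        using strict by blast
      have eq: "w - (v + u') = r - v" by (simp add: r_def)
      show ?thesis
      proof (rule bexI[of _ "v + u'"])
        show "Poly_Mapping.keys (w - (v + u')) \<subseteq> - ltset V \<inter> {..h}" unfolding eq using v(2) .
        show "v + u' \<in> V" by (rule subsp_add[OF S v(1) u'V])
      qed
    qed
  qed
qed

lemma decomp_exists':
  fixes V :: "('g::wellorder, 'k::field) vec set"
  assumes S: "subsp V"
  shows "\<exists>v\<in>V. Poly_Mapping.keys (w - v) \<subseteq> - ltset V"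
proof (cases "w = 0")
  case True then show ?thesis using subsp_0[OF S] by (intro bexI[of _ 0]) auto
next
  case False
  from decomp_exists[OF S, of "lt w", rule_format, OF le_lt] show ?thesis by blast
qed

lemma decomp_unique:
  fixes V :: "('g::wellorder, 'k::field) vec set"
  assumes S: "subsp V" and v1: "v1 \<in> V" "Poly_Mapping.keys (w - v1) \<subseteq> - ltset V"
    and v2: "v2 \<in> V" "Poly_Mapping.keys (w - v2) \<subseteq> - ltset V"
  shows "v1 = v2"
proof (rule ccontr)
  assume ne: "v1 \<noteq> v2"
  define d where "d = v1 - v2"
  have dV: "d \<in> V" using subsp_diff[OF S v1(1) v2(1)] by (simp add: d_def)
  have deq: "d = (w - v2) - (w - v1)" by (simp add: d_def)
  have "Poly_Mapping.keys d \<subseteq> Poly_Mapping.keys (w - v2) \<union> Poly_Mapping.keys (w - v1)"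
    unfolding deq by (rule keys_diff)
  hence kd: "Poly_Mapping.keys d \<subseteq> - ltset V" using v1(2) v2(2) by blast
  have dnz: "d \<noteq> 0" using ne by (simp add: d_def)
  hence "lt d \<in> ltset V" using dV by (auto simp: ltset_def)
  moreover have "lt d \<in> Poly_Mapping.keys d" using lt_in_keys[OF dnz] .
  ultimately show False using kd by blast
qed

lemma kerinv_exists:
  fixes V :: "('g::wellorder, 'k::field) vec set"
  assumes S: "subsp V"
  shows "\<exists>T. reduction_op T \<and> kerop T = V"
proof -
  define N where "N = - ltset V"
  define P where "P w = (THE v. v \<in> V \<and> Poly_Mapping.keys (w - v) \<subseteq> N)" for w
  have Pp: "P w \<in> V \<and> Poly_Mapping.keys (w - P w) \<subseteq> N" for w
  proof -
    have "\<exists>!v. v \<in> V \<and> Poly_Mapping.keys (w - v) \<subseteq> N"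
    proof (rule ex_ex1I)
      show "\<exists>v. v \<in> V \<and> Poly_Mapping.keys (w - v) \<subseteq> N"
        using decomp_exists'[OF S, of w] unfolding N_def by blast
      fix v1 v2 assume "v1 \<in> V \<and> Poly_Mapping.keys (w - v1) \<subseteq> N" "v2 \<in> V \<and> Poly_Mapping.keys (w - v2) \<subseteq> N"
      then show "v1 = v2" unfolding N_def by (intro decomp_unique[OF S]) auto
    qed
    then show ?thesis unfolding P_def by (rule theI')
  qed
  have Peq: "P w = v" if "v \<in> V" "Poly_Mapping.keys (w - v) \<subseteq> N" for w v
  proof -
    have "v = P w" by (rule decomp_unique[OF S that[unfolded N_def]]) (use Pp[of w] in \<open>auto simp: N_def\<close>)
    then show ?thesis by simp
  qed
  define T where "T w = w - P w" for w
  have Padd: "P (u + w) = P u + P w" for u w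
  proof (rule Peq)
    show "P u + P w \<in> V" using Pp subsp_add[OF S] by blast
    have eq: "u + w - (P u + P w) = (u - P u) + (w - P w)" by simp
    show "Poly_Mapping.keys (u + w - (P u + P w)) \<subseteq> N"
      unfolding eq using keys_add[of "u - P u" "w - P w"] Pp by blast
  qed
  have Psmul: "P (smul c w) = smul c (P w)" for c w
  proof (rule Peq)
    show "smul c (P w) \<in> V" using Pp subsp_smul[OF S] by blast
    have "smul c w - smul c (P w) = smul c (w - P w)" by (simp add: smul_diff)
    then show "Poly_Mapping.keys (smul c w - smul c (P w)) \<subseteq> N"
      using keys_smul[of c "w - P w"] Pp by auto
  qed
  have lin: "is_linear T"
    unfolding is_linear_def T_def by (simp add: Padd Psmul smul_diff)
  have PT: "P (T w) = 0" for w
    by (rule Peq) (auto simp: subsp_0[OF S] T_def Pp)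
  have idem: "T (T v) = T v" for v by (simp add: T_def[of "T v"] PT)
  have vl: "vle (T (bvec g)) (bvec g)" for g
  proof (cases "g \<in> N")
    case True
    have "P (bvec g) = 0" by (rule Peq) (auto simp: subsp_0[OF S] True)
    then show ?thesis by (simp add: T_def vle_def)
  next
    case False
    obtain v where v: "v \<in> V" "Poly_Mapping.keys (bvec g - v) \<subseteq> - ltset V \<inter> {..g}"
      using decomp_exists[OF S, of g, rule_format, of "bvec g"] by auto
    have "P (bvec g) = v" using v by (intro Peq) (auto simp: N_def)
    hence Tg: "T (bvec g) = bvec g - v" by (simp add: T_def)
    have kl: "\<forall>k\<in>Poly_Mapping.keys (T (bvec g)). k < g"
    proof
      fix k assume "k \<in> Poly_Mapping.keys (T (bvec g))"
      hence "k \<le> g" "k \<notin> ltset V" using v(2) unfolding Tg by auto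
      moreover have "g \<in> ltset V" using False by (simp add: N_def)
      ultimately show "k < g" by (metis order_le_less)
    qed
    show ?thesis
    proof (cases "T (bvec g) = 0")
      case True then show ?thesis by (simp add: vle_def vless_def)
    next
      case False
      then show ?thesis using kl lt_in_keys[OF False] by (simp add: vle_def vless_def)
    qed
  qed
  have ker: "kerop T = V"
  proof
    show "kerop T \<subseteq> V"
    proof
      fix w assume "w \<in> kerop T"
      hence "w = P w" by (simp add: kerop_def T_def)
      then show "w \<in> V" using Pp by metis
    qed
    show "V \<subseteq> kerop T"
    proof
      fix w assume "w \<in> V"
      hence "P w = w" by (intro Peq) auto
      then show "w \<in> kerop T" by (simp add: kerop_def T_def)
    qed
  qed
  have "reduction_op T" unfolding reduction_op_def using lin idem vl by blast
  then show ?thesis using ker by blast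
qed

lemma kerinv_props:
  assumes S: "subsp V"
  shows "reduction_op (kerinv V) \<and> kerop (kerinv V) = V"
proof -
  have "\<exists>!T. reduction_op T \<and> kerop T = V"
  proof (rule ex_ex1I)
    show "\<exists>T. reduction_op T \<and> kerop T = V" by (rule kerinv_exists[OF S])
    fix T1 T2 assume "reduction_op T1 \<and> kerop T1 = V" "reduction_op T2 \<and> kerop T2 = V"
    then show "T1 = T2" by (intro red_unique) auto
  qed
  then show ?thesis unfolding kerinv_def by (rule theI')
qed

lemma sumker_subsp:
  assumes L: "\<forall>T\<in>F. is_linear T"
  shows "subsp (sumker F)"
  unfolding subsp_def
proof (intro conjI ballI allI)
  show "0 \<in> sumker F" unfolding sumker_def
    by (rule CollectI, rule exI[of _ "{}"], rule exI[of _ "\<lambda>_. 0"]) simp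
next
  fix u w assume u: "u \<in> sumker F" and w: "w \<in> sumker F"
  from u obtain A f where A: "u = (\<Sum>T\<in>A. f T)" "finite A" "A \<subseteq> F" "\<forall>T\<in>A. f T \<in> kerop T"
    unfolding sumker_def by blast
  from w obtain B f' where B: "w = (\<Sum>T\<in>B. f' T)" "finite B" "B \<subseteq> F" "\<forall>T\<in>B. f' T \<in> kerop T"
    unfolding sumker_def by blast
  define h where "h T = (if T \<in> A then f T else 0) + (if T \<in> B then f' T else 0)" for T
  have fin: "finite (A \<union> B)" using A B by simp
  have "(\<Sum>T\<in>A \<union> B. h T) = (\<Sum>T\<in>A \<union> B. (if T \<in> A then f T else 0)) + (\<Sum>T\<in>A \<union> B. (if T \<in> B then f' T else 0))"
    unfolding h_def by (rule sum.distrib)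
  also have "\<dots> = u + w"
    unfolding A(1) B(1) using sum.inter_restrict[OF fin, of f A] sum.inter_restrict[OF fin, of f' B]
    by (simp add: Int_absorb1 Int_commute)
  finally have eq: "u + w = (\<Sum>T\<in>A \<union> B. h T)" by simp
  have "\<forall>T\<in>A \<union> B. h T \<in> kerop T"
  proof
    fix T assume T: "T \<in> A \<union> B"
    hence S: "subsp (kerop T)" using L A(3) B(3) subsp_ker by blast
    show "h T \<in> kerop T" unfolding h_def
      using A(4) B(4) subsp_0[OF S] subsp_add[OF S] by auto
  qed
  then show "u + w \<in> sumker F" unfolding sumker_def using eq fin A(3) B(3) by blast
next
  fix c u assume u: "u \<in> sumker F"
  from u obtain A f where A: "u = (\<Sum>T\<in>A. f T)" "finite A" "A \<subseteq> F" "\<forall>T\<in>A. f T \<in> kerop T"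
    unfolding sumker_def by blast
  have "smul c u = (\<Sum>T\<in>A. smul c (f T))" by (simp add: A(1) smul_sum)
  moreover have "\<forall>T\<in>A. smul c (f T) \<in> kerop T"
    using A(3,4) L subsp_smul[OF subsp_ker] by blast
  ultimately show "smul c u \<in> sumker F" unfolding sumker_def using A(2,3) by blast
qed

lemma ker_sub_sumker: "T \<in> F \<Longrightarrow> kerop T \<subseteq> sumker F"
proof
  fix v assume T: "T \<in> F" and v: "v \<in> kerop T"
  have "v = (\<Sum>S\<in>{T}. (\<lambda>_. v) S)" by simp
  then show "v \<in> sumker F" unfolding sumker_def using T v by blast
qed

lemma sumker_mono: "F \<subseteq> F' \<Longrightarrow> sumker F \<subseteq> sumker F'"
  unfolding sumker_def by blast

lemma sumker_le: "subsp W \<Longrightarrow> \<forall>T\<in>F. kerop T \<subseteq> W \<Longrightarrow> sumker F \<subseteq> W"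
proof
  fix v assume W: "subsp W" and K: "\<forall>T\<in>F. kerop T \<subseteq> W" and v: "v \<in> sumker F"
  from v obtain A f where A: "v = (\<Sum>T\<in>A. f T)" "finite A" "A \<subseteq> F" "\<forall>T\<in>A. f T \<in> kerop T"
    unfolding sumker_def by blast
  have "\<forall>T\<in>A. f T \<in> W" using A(3,4) K by blast
  then show "v \<in> W" unfolding A(1) by (rule subsp_sum[OF W])
qed

lemma meet_props:
  assumes L: "\<forall>T\<in>F. is_linear T"
  shows "reduction_op (meet F) \<and> kerop (meet F) = sumker F"
  unfolding meet_def using kerinv_props[OF sumker_subsp[OF L]] .

lemma CF_props:
  assumes L: "\<forall>T\<in>F. is_linear T"
  shows "reduction_op (CF F) \<and> kerop (CF F) = sumker F \<inter> {w. Poly_Mapping.keys w \<subseteq> nfF F}"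
proof -
  have k1: "kerop (meet F) = sumker F" using meet_props[OF L] by blast
  have k2: "kerop (kerinv (lspan (bvec ` nfF F))) = {w. Poly_Mapping.keys w \<subseteq> nfF F}"
    unfolding lspan_bvec by (rule conjunct2[OF kerinv_props[OF subsp_keys]])
  have S: "subsp (sumker F \<inter> {w. Poly_Mapping.keys w \<subseteq> nfF F})"
    by (rule subsp_Int[OF sumker_subsp[OF L] subsp_keys])
  show ?thesis unfolding CF_def join_def k1 k2 using kerinv_props[OF S] .
qed

lemma lin_ext_sup:
  assumes "finite S" "Poly_Mapping.keys v \<subseteq> S"
  shows "lin_ext f v = (\<Sum>g\<in>S. smul (Poly_Mapping.lookup v g) (f g))"
  unfolding lin_ext_def
  by (rule sum.mono_neutral_left[OF assms]) (auto simp: in_keys_iff)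

lemma lin_ext_bvec: "lin_ext f (bvec g) = f g"
  by (simp add: lin_ext_def lookup_bvec)

lemma lin_ext_linear:
  fixes f :: "'g \<Rightarrow> ('g, 'k::field) vec"
  shows "is_linear (lin_ext f)"
  unfolding is_linear_def
proof (intro conjI allI)
  fix u v :: "('g, 'k) vec"
  let ?S = "Poly_Mapping.keys u \<union> Poly_Mapping.keys v"
  have f: "finite ?S" by simp
  have "lin_ext f (u + v) = (\<Sum>g\<in>?S. smul (Poly_Mapping.lookup (u + v) g) (f g))"
    using keys_add[of u v] by (intro lin_ext_sup[OF f]) auto
  also have "\<dots> = (\<Sum>g\<in>?S. smul (Poly_Mapping.lookup u g) (f g)) + (\<Sum>g\<in>?S. smul (Poly_Mapping.lookup v g) (f g))"
    by (simp add: lookup_add smul_add2 sum.distrib)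
  also have "\<dots> = lin_ext f u + lin_ext f v"
    by (subst (1 2) lin_ext_sup[OF f]) auto
  finally show "lin_ext f (u + v) = lin_ext f u + lin_ext f v" .
next
  fix c :: 'k and v :: "('g, 'k) vec"
  have f: "finite (Poly_Mapping.keys v)" by simp
  have "lin_ext f (smul c v) = (\<Sum>g\<in>Poly_Mapping.keys v. smul (Poly_Mapping.lookup (smul c v) g) (f g))"
    using keys_smul[of c v] by (intro lin_ext_sup[OF f]) auto
  also have "\<dots> = smul c (lin_ext f v)"
    by (simp add: lin_ext_def smul_sum smul_smul)
  finally show "lin_ext f (smul c v) = smul c (lin_ext f v)" .
qed

section \<open>The reduced family\<close>

definition fT :: "('g::wellorder, 'k::field) op list \<Rightarrow> nat \<Rightarrow> 'g \<Rightarrow> ('g, 'k) vec" where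
  "fT Ts i g = (if g \<in> red (Ts ! i) \<and> (i, g) \<in> lt_syz Ts then bvec g else (Ts ! i) (bvec g))"

lemma rf_len [simp]: "length (red_family Ts) = length Ts"
  by (simp add: red_family_def)

lemma rf_nth: "i < length Ts \<Longrightarrow> red_family Ts ! i = lin_ext (fT Ts i)"
  by (simp add: red_family_def fT_def[abs_def] cong: if_cong)

lemma rf_lin: "T \<in> set (red_family Ts) \<Longrightarrow> is_linear T"
  by (auto simp: red_family_def lin_ext_linear)

lemma fT_nf: "g \<in> nf (Ts ! i) \<Longrightarrow> fT Ts i g = bvec g"
  by (simp add: fT_def nf_def red_def)

lemma rf_nf: "i < length Ts \<Longrightarrow> nf (Ts ! i) \<subseteq> nf (red_family Ts ! i)"
  by (auto simp: rf_nth lin_ext_bvec fT_nf intro: nf_def[THEN eqset_imp_iff, THEN iffD2])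

lemma rf_id: "i < length Ts \<Longrightarrow> Poly_Mapping.keys w \<subseteq> nf (Ts ! i) \<Longrightarrow> (red_family Ts ! i) w = w"
proof -
  assume i: "i < length Ts" and k: "Poly_Mapping.keys w \<subseteq> nf (Ts ! i)"
  have "(red_family Ts ! i) w = (\<Sum>g\<in>Poly_Mapping.keys w. smul (Poly_Mapping.lookup w g) (fT Ts i g))"
    by (simp add: rf_nth[OF i] lin_ext_def)
  also have "\<dots> = (\<Sum>g\<in>Poly_Mapping.keys w. smul (Poly_Mapping.lookup w g) (bvec g))"
  proof (rule sum.cong)
    fix g assume "g \<in> Poly_Mapping.keys w"
    hence "g \<in> nf (Ts ! i)" using k by blast
    then show "smul (Poly_Mapping.lookup w g) (fT Ts i g) = smul (Poly_Mapping.lookup w g) (bvec g)"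
      by (simp add: fT_nf)
  qed simp
  also have "\<dots> = w" by (rule expansion[symmetric])
  finally show ?thesis .
qed

lemma exp_diff: "v - (\<Sum>g\<in>Poly_Mapping.keys v. smul (Poly_Mapping.lookup v g) (f g))
   = (\<Sum>g\<in>Poly_Mapping.keys v. smul (Poly_Mapping.lookup v g) (bvec g - f g))"
proof -
  have "(\<Sum>g\<in>Poly_Mapping.keys v. smul (Poly_Mapping.lookup v g) (bvec g - f g))
     = (\<Sum>g\<in>Poly_Mapping.keys v. smul (Poly_Mapping.lookup v g) (bvec g)) - (\<Sum>g\<in>Poly_Mapping.keys v. smul (Poly_Mapping.lookup v g) (f g))"
    by (simp add: smul_diff sum_subtractf)
  then show ?thesis using expansion[of v] by simp
qed

lemma rf_ker:
  assumes R: "reduction_op (Ts ! i)" and i: "i < length Ts"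
  shows "kerop (red_family Ts ! i) \<subseteq> kerop (Ts ! i)"
proof
  fix v assume "v \<in> kerop (red_family Ts ! i)"
  hence z: "(\<Sum>g\<in>Poly_Mapping.keys v. smul (Poly_Mapping.lookup v g) (fT Ts i g)) = 0"
    by (simp add: kerop_def rf_nth[OF i] lin_ext_def)
  have "v = (\<Sum>g\<in>Poly_Mapping.keys v. smul (Poly_Mapping.lookup v g) (bvec g - fT Ts i g))"
    using exp_diff[of v "fT Ts i"] z by simp
  moreover have "\<forall>g. bvec g - fT Ts i g \<in> kerop (Ts ! i)"
    using red_ker_e[OF R] by (simp add: fT_def kerop_def lin_0[OF red_lin[OF R]])
  ultimately show "v \<in> kerop (Ts ! i)"
    using subsp_sum[OF subsp_ker[OF red_lin[OF R]]] subsp_smul[OF subsp_ker[OF red_lin[OF R]]]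
    by (metis (no_types, lifting))
qed

lemma e_in_W:
  assumes R: "\<forall>T\<in>set Ts. reduction_op T"
  shows "i < length Ts \<Longrightarrow> bvec g - (Ts ! i) (bvec g) \<in> sumker (set (red_family Ts))"
proof (induction i arbitrary: g rule: less_induct)
  case (less i)
  note IHi = less.IH
  note ilen = less.prems
  define W where "W = sumker (set (red_family Ts))"
  have SW: "subsp W" unfolding W_def by (rule sumker_subsp) (auto intro: rf_lin)
  define T where "T = Ts ! i"
  have RT: "reduction_op T" using R ilen by (simp add: T_def)
  define E where "E q = bvec (snd q) - (Ts ! fst q) (bvec (snd q))" for q :: "nat \<times> 'a"
  show ?case unfolding W_def[symmetric] T_def[symmetric]
  proof (induction g rule: less_induct)
    case (less g)
    show ?case
    proof (cases "g \<in> red T \<and> (i, g) \<in> lt_syz Ts")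
      case False
      have fg: "fT Ts i g = T (bvec g)" using False unfolding fT_def T_def by auto
      define S where "S = red_family Ts ! i"
      have Sin: "S \<in> set (red_family Ts)" unfolding S_def using ilen by simp
      have LS: "is_linear S" by (rule rf_lin[OF Sin])
      have "S (bvec g) = T (bvec g)" by (simp add: S_def rf_nth[OF ilen] lin_ext_bvec fg)
      moreover have "S (T (bvec g)) = T (bvec g)"
        unfolding S_def using rf_id[OF ilen] red_image[OF RT] by (simp add: T_def)
      ultimately have "bvec g - T (bvec g) \<in> kerop S" by (simp add: kerop_def lin_diff[OF LS])
      moreover have "kerop S \<subseteq> W" unfolding W_def by (rule ker_sub_sumker[OF Sin])
      ultimately show ?thesis by blast
    next
      case True
      hence "(i, g) \<in> lt_syz Ts" by simp
      then obtain w Q c where H: "w \<in> syz Ts \<and> w \<noteq> (\<lambda>_. 0) \<and> finite Q \<and> Q \<subseteq> eidx Ts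
       \<and> (\<forall>q\<in>Q. c q \<noteq> 0)
       \<and> w = (\<lambda>j. \<Sum>q\<in>Q. smul (c q) (ebas Ts (fst q) (snd q) j))
       \<and> (i, g) \<in> Q \<and> (\<forall>q\<in>Q. q = (i, g) \<or> sqless q (i, g))"
        unfolding lt_syz_def mem_Collect_eq by (elim exE) (erule that)
      hence syz: "w \<in> syz Ts" and fin: "finite Q" and Qe: "Q \<subseteq> eidx Ts" and cnz: "\<forall>q\<in>Q. c q \<noteq> 0"
        and w: "w = (\<lambda>j. \<Sum>q\<in>Q. smul (c q) (ebas Ts (fst q) (snd q) j))"
        and pQ: "(i, g) \<in> Q" and mx: "\<forall>q\<in>Q. q = (i, g) \<or> sqless q (i, g)"
        by auto
      have fq: "fst q < length Ts" if "q \<in> Q" for q using Qe that by (auto simp: eidx_def)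
      have "(\<Sum>j<length Ts. w j) = 0" using syz by (simp add: syz_def)
      hence "0 = (\<Sum>j<length Ts. \<Sum>q\<in>Q. smul (c q) (ebas Ts (fst q) (snd q) j))" by (simp add: w)
      also have "\<dots> = (\<Sum>q\<in>Q. \<Sum>j<length Ts. smul (c q) (ebas Ts (fst q) (snd q) j))"
        by (rule sum.swap)
      also have "\<dots> = (\<Sum>q\<in>Q. smul (c q) (E q))"
      proof (rule sum.cong)
        fix q assume q: "q \<in> Q"
        have "(\<Sum>j<length Ts. smul (c q) (ebas Ts (fst q) (snd q) j))
            = (\<Sum>j<length Ts. (if j = fst q then smul (c q) (E q) else 0))"
          by (rule sum.cong) (auto simp: ebas_def E_def)
        also have "\<dots> = smul (c q) (E q)" using fq[OF q] by (simp add: sum.delta)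
        finally show "(\<Sum>j<length Ts. smul (c q) (ebas Ts (fst q) (snd q) j)) = smul (c q) (E q)" .
      qed simp
      also have "\<dots> = smul (c (i,g)) (E (i,g)) + (\<Sum>q\<in>Q - {(i,g)}. smul (c q) (E q))"
        by (rule sum.remove[OF fin pQ])
      finally have eq: "smul (c (i,g)) (E (i,g)) = - (\<Sum>q\<in>Q - {(i,g)}. smul (c q) (E q))"
        by (simp add: eq_neg_iff_add_eq_0)
      have "\<forall>q\<in>Q - {(i,g)}. smul (c q) (E q) \<in> W"
      proof
        fix q assume q: "q \<in> Q - {(i,g)}"
        hence sq: "sqless q (i, g)" using mx by blast
        have "E q \<in> W"
        proof (cases "fst q < i")
          case True
          then show ?thesis using IHi[OF True] fq q by (simp add: E_def W_def)
        next
          case False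
          hence "fst q = i" "snd q < g" using sq by (auto simp: sqless_def)
          then show ?thesis using less.IH[of "snd q"] by (simp add: E_def T_def)
        qed
        then show "smul (c q) (E q) \<in> W" by (rule subsp_smul[OF SW])
      qed
      hence "smul (c (i,g)) (E (i,g)) \<in> W" unfolding eq
        by (intro subsp_uminus[OF SW] subsp_sum[OF SW])
      hence "smul (1 / c (i,g)) (smul (c (i,g)) (E (i,g))) \<in> W" by (rule subsp_smul[OF SW])
      moreover have "c (i,g) \<noteq> 0" using cnz pQ by blast
      ultimately have "E (i,g) \<in> W" by (simp add: smul_smul)
      then show ?thesis by (simp add: E_def T_def)
    qed
  qed
qed

lemma ker_T_W:
  assumes R: "\<forall>T\<in>set Ts. reduction_op T" and i: "i < length Ts"
  shows "kerop (Ts ! i) \<subseteq> sumker (set (red_family Ts))"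
proof
  fix v assume "v \<in> kerop (Ts ! i)"
  hence z: "(Ts ! i) v = 0" by (simp add: kerop_def)
  have RT: "reduction_op (Ts ! i)" using R i by simp
  have SW: "subsp (sumker (set (red_family Ts)))" by (rule sumker_subsp) (auto intro: rf_lin)
  have "v = v - (Ts ! i) v" using z by simp
  also have "\<dots> = v - (\<Sum>g\<in>Poly_Mapping.keys v. smul (Poly_Mapping.lookup v g) ((Ts ! i) (bvec g)))"
    using lin_expand[OF red_lin[OF RT], of v] by simp
  also have "\<dots> = (\<Sum>g\<in>Poly_Mapping.keys v. smul (Poly_Mapping.lookup v g) (bvec g - (Ts ! i) (bvec g)))"
    by (rule exp_diff)
  finally show "v \<in> sumker (set (red_family Ts))"
    using subsp_sum[OF SW] subsp_smul[OF SW] e_in_W[OF R i] by (metis (no_types, lifting))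
qed

lemma nfF_iff: "g \<in> nfF F \<longleftrightarrow> (\<forall>T\<in>F. g \<in> nf T)"
  by (simp add: nfF_def)

lemma incF_inv:
  assumes R: "\<forall>T\<in>set Ts. reduction_op T" and k: "k < length Ts"
  shows "(\<forall>T\<in>incF (red_family Ts) k. is_linear T \<and> kerop T \<subseteq> sumker (set Ts))
       \<and> incF (red_family Ts) k \<subseteq> set (red_family Ts) \<union> incC (red_family Ts)
       \<and> (\<forall>i\<le>k. red_family Ts ! i \<in> incF (red_family Ts) k)"
  using k
proof (induction k)
  case 0
  have SK: "subsp (sumker (set Ts))" by (rule sumker_subsp) (use R red_lin in blast)
  have "kerop (red_family Ts ! 0) \<subseteq> sumker (set Ts)"
    using rf_ker[of Ts 0] R 0 ker_sub_sumker[of "Ts ! 0" "set Ts"] by force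
  moreover have S0: "red_family Ts ! 0 \<in> set (red_family Ts)" using 0 by simp
  moreover have "is_linear (red_family Ts ! 0)" by (rule rf_lin[OF S0])
  ultimately show ?case by simp
next
  case (Suc k)
  let ?Ss = "red_family Ts"
  let ?Y = "incF ?Ss k \<union> {?Ss ! Suc k}"
  have SK: "subsp (sumker (set Ts))" by (rule sumker_subsp) (use R red_lin in blast)
  have IH: "(\<forall>T\<in>incF ?Ss k. is_linear T \<and> kerop T \<subseteq> sumker (set Ts))
       \<and> incF ?Ss k \<subseteq> set ?Ss \<union> incC ?Ss \<and> (\<forall>i\<le>k. ?Ss ! i \<in> incF ?Ss k)"
    using Suc by simp
  have Sk: "?Ss ! Suc k \<in> set ?Ss" using Suc.prems by simp
  have kS: "kerop (?Ss ! Suc k) \<subseteq> sumker (set Ts)"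
    using rf_ker[of Ts "Suc k"] R Suc.prems ker_sub_sumker[of "Ts ! Suc k" "set Ts"] by force
  have LY: "\<forall>T\<in>?Y. is_linear T" using IH rf_lin[OF Sk] by blast
  have KY: "\<forall>T\<in>?Y. kerop T \<subseteq> sumker (set Ts)" using IH kS by blast
  have C: "reduction_op (CF ?Y) \<and> kerop (CF ?Y) \<subseteq> sumker (set Ts)"
    using CF_props[OF LY] sumker_le[OF SK KY] by blast
  have CinC: "CF ?Y \<in> incC ?Ss" unfolding incC_def using Suc.prems
    by (intro CollectI exI[of _ "Suc k"]) simp
  have F: "incF ?Ss (Suc k) = incF ?Ss k \<union> {?Ss ! Suc k, CF ?Y}" by simp
  have LC: "is_linear (CF ?Y)" using C red_lin by blast
  have KC: "kerop (CF ?Y) \<subseteq> sumker (set Ts)" using C by blast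
  have A1: "\<forall>T\<in>incF ?Ss (Suc k). is_linear T \<and> kerop T \<subseteq> sumker (set Ts)"
    unfolding F using LY KY LC KC by blast
  have A2: "incF ?Ss (Suc k) \<subseteq> set ?Ss \<union> incC ?Ss"
    unfolding F using IH Sk CinC by blast
  have A3: "\<forall>i\<le>Suc k. ?Ss ! i \<in> incF ?Ss (Suc k)"
  proof (intro allI impI)
    fix i assume "i \<le> Suc k"
    then consider "i \<le> k" | "i = Suc k" by linarith
    then show "?Ss ! i \<in> incF ?Ss (Suc k)"
    proof cases
      case 1 then show ?thesis using IH unfolding F by blast
    next
      case 2 then show ?thesis unfolding F by blast
    qed
  qed
  show ?case using A1 A2 A3 by (intro conjI)
qed

theorem main_aux:
  fixes Ts :: "('g::wellorder, 'k::field) op list"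
  assumes R: "\<forall>T\<in>set Ts. reduction_op T"
  shows "is_completion (set Ts \<union> incC (red_family Ts)) (set Ts)"
proof -
  define n where "n = length Ts"
  define Ss where "Ss = red_family Ts"
  define K where "K = sumker (set Ts)"
  define X where "X = set Ts \<union> incC Ss"
  have SK: "subsp K" unfolding K_def by (rule sumker_subsp) (use R red_lin in blast)
  have incC_props: "reduction_op C \<and> kerop C \<subseteq> K" if C: "C \<in> incC Ss" for C
  proof -
    from C have "\<exists>k. C = CF (incF Ss (k - 1) \<union> {Ss ! k}) \<and> 1 \<le> k \<and> k < length Ss"
      unfolding incC_def by (rule CollectD)
    then obtain k where k: "1 \<le> k" "k < n" and Ceq: "C = CF (incF Ss (k - 1) \<union> {Ss ! k})"
      unfolding n_def Ss_def by auto
    let ?Y = "incF Ss (k - 1) \<union> {Ss ! k}"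
    have I: "\<forall>T\<in>incF Ss (k - 1). is_linear T \<and> kerop T \<subseteq> K"
      using incF_inv[OF R, of "k - 1"] k unfolding Ss_def K_def n_def by auto
    have Sk: "Ss ! k \<in> set Ss" using k by (simp add: Ss_def n_def)
    have kS: "kerop (Ss ! k) \<subseteq> K"
      using rf_ker[of Ts k] R k ker_sub_sumker[of "Ts ! k" "set Ts"] unfolding Ss_def K_def n_def by force
    have LY: "\<forall>T\<in>?Y. is_linear T" using I rf_lin Sk unfolding Ss_def by blast
    have KY: "\<forall>T\<in>?Y. kerop T \<subseteq> K" using I kS by blast
    show ?thesis using CF_props[OF LY] sumker_le[OF SK KY] Ceq by blast
  qed
  have XR: "\<forall>T\<in>X. reduction_op T" using R incC_props unfolding X_def by blast
  have XK: "\<forall>T\<in>X. kerop T \<subseteq> K"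
    using incC_props ker_sub_sumker unfolding X_def K_def by blast
  have sX: "sumker X = K"
  proof
    show "sumker X \<subseteq> K" by (rule sumker_le[OF SK XK])
    show "K \<subseteq> sumker X" unfolding K_def X_def by (rule sumker_mono) blast
  qed
  have mX: "meet X = meet (set Ts)" unfolding meet_def sX K_def ..
  define M where "M = meet X"
  have MP: "reduction_op M \<and> kerop M = K"
    unfolding M_def using meet_props[of X] XR red_lin sX by blast
  have nfM: "nf M \<subseteq> nfF X"
  proof
    fix h assume h: "h \<in> nf M"
    show "h \<in> nfF X" unfolding nfF_iff
    proof
      fix T assume T: "T \<in> X"
      show "h \<in> nf T"
      proof (rule ccontr)
        assume "h \<notin> nf T"
        hence "h \<in> red T" by (simp add: red_def)
        from red_R'[OF XR[rule_format, OF T] this] have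
          e: "bvec h - T (bvec h) \<noteq> 0" "lt (bvec h - T (bvec h)) = h" "bvec h - T (bvec h) \<in> kerop T"
          by (auto simp: kerop_def)
        hence "M (bvec h - T (bvec h)) = 0" using XK T MP by (auto simp: kerop_def)
        hence "h \<in> red M" using red_R[of M] MP e by metis
        then show False using h by (simp add: red_def)
      qed
    qed
  qed
  have conf: "nfF X \<subseteq> nf M"
  proof
    fix g assume g: "g \<in> nfF X"
    show "g \<in> nf M"
    proof (rule ccontr)
      assume "g \<notin> nf M"
      hence gr: "g \<in> red M" by (simp add: red_def)
      define v where "v = bvec g - M (bvec g)"
      from red_R'[of M g] MP gr have v: "v \<noteq> 0" "lt v = g" "v \<in> K"
        by (auto simp: v_def kerop_def)
      have kv: "Poly_Mapping.keys v \<subseteq> nfF X"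
        using keys_diff[of "bvec g" "M (bvec g)"] red_image[of M "bvec g"] MP nfM g
        unfolding v_def by auto
      consider "n = 0" | "n = 1" | "n \<ge> 2" by linarith
      then show False
      proof cases
        case 1
        hence "K \<subseteq> {0}" unfolding K_def n_def
          by (intro sumker_le) (auto simp: subsp_def)
        then show False using v by blast
      next
        case 2
        hence Ts: "set Ts = {Ts ! 0}" unfolding n_def
          by (metis One_nat_def length_0_conv length_Suc_conv list.set(1) list.set(2) nth_Cons_0)
        have R0: "reduction_op (Ts ! 0)" using R Ts by blast
        have "K \<subseteq> kerop (Ts ! 0)" unfolding K_def Ts
          by (intro sumker_le subsp_ker red_lin R0) auto
        hence "(Ts ! 0) v = 0" using v by (auto simp: kerop_def)
        hence "g \<in> red (Ts ! 0)" using red_R[OF R0] v by metis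
        moreover have "g \<in> nf (Ts ! 0)" using g Ts unfolding X_def nfF_iff by blast
        ultimately show False by (simp add: red_def)
      next
        case 3
        let ?Y = "incF Ss (n - 2) \<union> {Ss ! (n - 1)}"
        define C where "C = CF ?Y"
        have nn: "n - 1 - 1 = n - 2" by simp
        have CinC: "C \<in> incC Ss" unfolding incC_def C_def
        proof (rule CollectI, rule exI[of _ "n - 1"], intro conjI)
          show "CF ?Y = CF (incF Ss (n - 1 - 1) \<union> {Ss ! (n - 1)})" by (simp only: nn)
          show "1 \<le> n - 1" using 3 by simp
          show "n - 1 < length Ss" using 3 by (simp add: Ss_def n_def)
        qed
        have I: "(\<forall>T\<in>incF Ss (n - 2). is_linear T \<and> kerop T \<subseteq> K)
           \<and> incF Ss (n - 2) \<subseteq> set Ss \<union> incC Ss \<and> (\<forall>i\<le>n - 2. Ss ! i \<in> incF Ss (n - 2))"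
          using incF_inv[OF R, of "n - 2"] 3 unfolding Ss_def K_def n_def by simp
        have Sk: "Ss ! (n - 1) \<in> set Ss" using 3 by (simp add: Ss_def n_def)
        have LY: "\<forall>T\<in>?Y. is_linear T" using I rf_lin Sk unfolding Ss_def by blast
        have CP: "reduction_op C \<and> kerop C = sumker ?Y \<inter> {w. Poly_Mapping.keys w \<subseteq> nfF ?Y}"
          unfolding C_def using CF_props[OF LY] .
        have setSs: "set Ss \<subseteq> ?Y"
        proof
          fix T assume "T \<in> set Ss"
          then obtain i where i: "i < n" "T = Ss ! i" by (auto simp: in_set_conv_nth Ss_def n_def)
          show "T \<in> ?Y"
          proof (cases "i \<le> n - 2")
            case True then show ?thesis using I i by blast
          next
            case False hence "i = n - 1" using i by linarith
            then show ?thesis using i by blast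
          qed
        qed
        have SW: "subsp (sumker (set Ss))" unfolding Ss_def by (rule sumker_subsp) (auto intro: rf_lin)
        have kT: "\<forall>T\<in>set Ts. kerop T \<subseteq> sumker (set Ss)"
        proof
          fix T assume "T \<in> set Ts"
          then obtain i where "i < length Ts" "T = Ts ! i" by (auto simp: in_set_conv_nth)
          then show "kerop T \<subseteq> sumker (set Ss)" using ker_T_W[OF R] by (simp add: Ss_def)
        qed
        have "K \<subseteq> sumker (set Ss)" unfolding K_def by (rule sumker_le[OF SW kT])
        also have "\<dots> \<subseteq> sumker ?Y" by (rule sumker_mono[OF setSs])
        finally have vY: "v \<in> sumker ?Y" using v by blast
        have nfXY: "nfF X \<subseteq> nfF ?Y"
        proof
          fix h assume h: "h \<in> nfF X"
          show "h \<in> nfF ?Y" unfolding nfF_iff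
          proof
            fix T assume T: "T \<in> ?Y"
            hence "T \<in> set Ss \<union> incC Ss" using I Sk by blast
            then show "h \<in> nf T"
            proof
              assume "T \<in> set Ss"
              then obtain i where i: "i < n" "T = Ss ! i" by (auto simp: in_set_conv_nth Ss_def n_def)
              have "h \<in> nf (Ts ! i)" using h i unfolding nfF_iff X_def n_def by auto
              then show ?thesis using rf_nf[of i Ts] i unfolding Ss_def n_def by blast
            next
              assume "T \<in> incC Ss" then show ?thesis using h unfolding nfF_iff X_def by blast
            qed
          qed
        qed
        have "v \<in> kerop C" using CP vY kv nfXY by blast
        hence "g \<in> red C" using red_R[of C v] CP v by (simp add: kerop_def)
        moreover have "g \<in> nf C" using g CinC unfolding nfF_iff X_def by blast
        ultimately show False by (simp add: red_def)
      qed
    qed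
  qed
  have "confluent X" unfolding confluent_def obs_def using conf M_def by blast
  then show ?thesis unfolding is_completion_def using XR mX unfolding X_def Ss_def by blast
qed

theorem mainTheorem8:
  fixes Ts :: "('g::wellorder, 'k::field) op list"
  assumes "\<forall>T\<in>set Ts. reduction_op T"
  shows "is_completion (set Ts \<union> incC (red_family Ts)) (set Ts)"
  using assms by (rule main_aux)

end
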